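(* In the semi-discrete heat setting described in the context, assume that the reference state $u$ satisfies the discrete non-degeneracy condition: for all $t>0$ and all $j\in\{1,\dots,N-1\}$, $\frac12u_{(2,j)}(t)-2u_{(1,j)}(t)\neq0$. Let $Z_d=u(T)$. Then there exist a neighborhood $\mathcal{V}(0)\subset C([0,T];W_h)$ of $0$ and a neighborhood $\mathcal{V}(Z_d)\subset\mathcal{F}(\mathring\Omega_h)$ of $Z_d$ such that for every $Z\in\mathcal{V}(Z_d)$ there exists $\varphi\in\mathcal{V}(0)$ with $u_\varphi(T)=Z$.
   Context: Let $h>0$, integers $M,N\ge2$, grid $\Omega_h=\{(ih,jh):0\le i\le M,0\le j\le N\}$ (discretizing the rectangle $[0,Mh]\times[0,Nh]$) with nodes indexed $(i,j)$, interior $\mathring\Omega_h=\{1\le i\le M-1,1\le j\le N-1\}$, $\Gamma^1=\{(1,j):1\le j\le N-1\}$; $\mathcal{F}(\mathring\Omega_h)$ is the space of real functions on $\mathring\Omega_h$, extended by $0$ on boundary nodes. For $j=1,\dots,N-1$, $V_j$ is the vector field equal to $(1,0)$ at boundary node $(0,j)$ and $0$ elsewhere, $W_h=\mathrm{span}(V_j)$. Perturbations are $\varphi(t)=\sum_{j=1}^{N-1}h\lambda_j(t)V_j$ with continuous bounded $\lambda_j$, $\sup_j\|\lambda_j\|_\infty<1/2$ (the boundary node $(0,jh)$ moves to $(h\lambda_j(t),jh)$). $A(\varphi)$ is the operator $[A(\varphi)\phi]_{(i,j)}=h^{-2}(4\phi_{(i,j)}-\phi_{(i+1,j)}-\phi_{(i-1,j)}-\phi_{(i,j+1)}-\phi_{(i,j-1)})$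 for $(i,j)\notin\Gamma^1$ and $[A(\varphi)\phi]_{(1,j)}=h^{-2}\big(2(1+\frac{1}{1+\lambda_j(t)})\phi_{(1,j)}-\frac{2}{2+\lambda_j(t)}\phi_{(2,j)}-\phi_{(1,j+1)}-\phi_{(1,j-1)}\big)$. Given a source $F:[0,\infty)\to\mathcal{F}(\mathring\Omega_h)$ (a discretization of the continuous source) and $u_0\in\mathcal{F}(\mathring\Omega_h)$, the perturbed state $u_\varphi\in C([0,T],\mathcal{F}(\mathring\Omega_h))$ solves $\partial_tu_\varphi+A(\varphi)u_\varphi=F$, $u_\varphi(0)=u_0$, and the reference state is $u=u_{\varphi=0}$. $T>0$ is fixed. *)

theory Defs
  imports "HOL-Analysis.Analysis"
begin

text \<open>Grid nodes are pairs (i,j) of naturals. A grid function is a map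
  nat \<times> nat \<Rightarrow> real; elements of F(interior) vanish off the interior nodes.\<close>

definition interior_node :: "nat \<Rightarrow> nat \<Rightarrow> nat \<times> nat \<Rightarrow> bool" where
  "interior_node M N p \<longleftrightarrow> 1 \<le> fst p \<and> fst p \<le> M - 1 \<and> 1 \<le> snd p \<and> snd p \<le> N - 1"

definition in_F :: "nat \<Rightarrow> nat \<Rightarrow> (nat \<times> nat \<Rightarrow> real) \<Rightarrow> bool" where
  "in_F M N f \<longleftrightarrow> (\<forall>p. \<not> interior_node M N p \<longrightarrow> f p = 0)"

text \<open>The operator A(phi) at a fixed time; lam j is the value lambda_j(t).
  Only its values at interior nodes are relevant.\<close>

definition Aop :: "real \<Rightarrow> (nat \<Rightarrow> real) \<Rightarrow> (nat \<times> nat \<Rightarrow> real) \<Rightarrow> nat \<times> nat \<Rightarrow> real" where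
  "Aop h lam \<phi> p = (let i = fst p; j = snd p in
     if i = 1 then
       (2 * (1 + 1 / (1 + lam j)) * \<phi> (1, j) - 2 / (2 + lam j) * \<phi> (2, j)
          - \<phi> (1, j + 1) - \<phi> (1, j - 1)) / h\<^sup>2
     else
       (4 * \<phi> (i, j) - \<phi> (i + 1, j) - \<phi> (i - 1, j) - \<phi> (i, j + 1) - \<phi> (i, j - 1)) / h\<^sup>2)"

definition is_sol ::
  "real \<Rightarrow> nat \<Rightarrow> nat \<Rightarrow> real set \<Rightarrow> (real \<Rightarrow> nat \<times> nat \<Rightarrow> real) \<Rightarrow> (nat \<times> nat \<Rightarrow> real)
     \<Rightarrow> (nat \<Rightarrow> real \<Rightarrow> real) \<Rightarrow> (real \<Rightarrow> nat \<times> nat \<Rightarrow> real) \<Rightarrow> bool" where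
  "is_sol h M N S F u0 lam v \<longleftrightarrow>
     v 0 = u0 \<and> (\<forall>t\<in>S. in_F M N (v t)) \<and>
     (\<forall>p. interior_node M N p \<longrightarrow> (\<forall>t\<in>S.
        ((\<lambda>s. v s p) has_real_derivative (F t p - Aop h (\<lambda>j. lam j t) (v t) p)) (at t within S)))"

text \<open>Admissible perturbations phi(t) = sum_j h lambda_j(t) V_j on [0,T]:
  lambda_j continuous (hence bounded) with sup_j ||lambda_j||_inf < 1/2.\<close>

definition admissible :: "nat \<Rightarrow> real \<Rightarrow> (nat \<Rightarrow> real \<Rightarrow> real) \<Rightarrow> bool" where
  "admissible N T lam \<longleftrightarrow>
     (\<forall>j\<in>{1..N-1}. continuous_on {0..T} (lam j)) \<and>
     (\<exists>c < 1/2. \<forall>j\<in>{1..N-1}. \<forall>t\<in>{0..T}. \<bar>lam j t\<bar> \<le> c)"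

end

theory Submission
  imports Defs "HOL-Computational_Algebra.Polynomial"
begin


lemma hp_diff: "(pderiv ^^ n) (p - q) = (pderiv ^^ n) p - (pderiv ^^ n) (q :: real poly)"
  by (induction n arbitrary: p q) (simp_all del: funpow.simps add: funpow_Suc_right pderiv_diff)

lemma lin_factor_deriv:
  fixes c :: real and g :: "real poly"
  shows "(q < n \<longrightarrow> poly ((pderiv ^^ q) ([:-c,1:]^n * g)) c = 0) \<and>
         (q = n \<longrightarrow> poly ((pderiv ^^ q) ([:-c,1:]^n * g)) c = fact n * poly g c)"
proof (induction n arbitrary: q g)
  case 0
  then show ?case by simp
next
  case (Suc n)
  have pd: "pderiv ([:-c,1:]^Suc n * g) = [:-c,1:]^n * (smult (of_nat (Suc n)) g + [:-c,1:] * pderiv g)"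
  proof -
    have pX: "pderiv [:-c,1:] = (1::real poly)" by (simp add: pderiv_pCons)
    have "pderiv ([:-c,1:]^Suc n * g) = [:-c,1:]^Suc n * pderiv g + g * (smult (of_nat (Suc n)) ([:-c,1:]^n) * 1)"
      by (simp only: pderiv_mult pderiv_power_Suc pX)
    also have "\<dots> = [:-c,1:]^n * (smult (of_nat (Suc n)) g + [:-c,1:] * pderiv g)"
      by (simp only: power_Suc mult_smult_left mult_smult_right distrib_left mult_1_right mult_1_left ac_simps)
    finally show ?thesis .
  qed
  show ?case
  proof (cases q)
    case 0
    then show ?thesis by simp
  next
    case (Suc q')
    have e: "(pderiv ^^ q) ([:-c,1:]^Suc n * g) = (pderiv ^^ q') ([:-c,1:]^n * (smult (of_nat (Suc n)) g + [:-c,1:] * pderiv g))"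
      using Suc by (simp only: funpow_Suc_right o_apply pd)
    define G where "G = smult (of_nat (Suc n)) g + [:-c,1:] * pderiv g"
    have pG: "poly G c = of_nat (Suc n) * poly g c" by (simp add: G_def)
    have IH: "(q' < n \<longrightarrow> poly ((pderiv ^^ q') ([:-c,1:]^n * G)) c = 0) \<and>
         (q' = n \<longrightarrow> poly ((pderiv ^^ q') ([:-c,1:]^n * G)) c = fact n * poly G c)"
      using Suc.IH by blast
    have e2: "poly ((pderiv ^^ q) ([:-c,1:]^Suc n * g)) c = poly ((pderiv ^^ q') ([:-c,1:]^n * G)) c"
      using e G_def by simp
    show ?thesis unfolding e2 using IH pG Suc by (simp add: algebra_simps)
  qed
qed

definition topP :: "nat \<Rightarrow> nat \<Rightarrow> nat \<Rightarrow> real \<Rightarrow> (nat \<Rightarrow> nat \<Rightarrow> real) \<Rightarrow> nat \<Rightarrow> real poly" where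
  "topP N K L c Y j = (if 1 \<le> j \<and> j \<le> N - 1 then (\<Sum>l<L. smult (Y l j) (monom 1 K * [:-c,1:]^l)) else 0)"

definition stepP :: "real \<Rightarrow> nat \<Rightarrow> (nat \<Rightarrow> real poly) \<Rightarrow> (nat \<Rightarrow> real poly) \<Rightarrow> nat \<Rightarrow> real poly" where
  "stepP h N a b j = (if 1 \<le> j \<and> j \<le> N - 1 then
     smult (h^2) (pderiv (a j)) + smult 4 (a j) - b j - a (j+1) - a (j-1) else 0)"

primrec lev :: "real \<Rightarrow> nat \<Rightarrow> (nat \<Rightarrow> real poly) \<Rightarrow> nat \<Rightarrow> (nat \<Rightarrow> real poly) \<times> (nat \<Rightarrow> real poly)" where
  "lev h N tp 0 = (tp, \<lambda>j. 0)"
| "lev h N tp (Suc m) = (stepP h N (fst (lev h N tp m)) (snd (lev h N tp m)), fst (lev h N tp m))"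

lemma lev_lin:
  "lev h N (\<lambda>j. smult \<alpha> (t1 j) + smult \<beta> (t2 j)) m =
   ((\<lambda>j. smult \<alpha> (fst (lev h N t1 m) j) + smult \<beta> (fst (lev h N t2 m) j)),
    (\<lambda>j. smult \<alpha> (snd (lev h N t1 m) j) + smult \<beta> (snd (lev h N t2 m) j)))"
proof (induction m)
  case 0
  then show ?case by simp
next
  case (Suc m)
  show ?case
    by (simp add: Suc stepP_def pderiv_add pderiv_smult smult_add_right smult_diff_right smult_smult fun_eq_iff)
       (simp add: algebra_simps smult_add_right smult_diff_right smult_smult)
qed

lemma lev_zero: "lev h N (\<lambda>j. 0) m = (\<lambda>j. 0, \<lambda>j. 0)"
  by (induction m) (simp_all add: stepP_def fun_eq_iff)

lemma lev_sum:
  assumes "finite I"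
  shows "lev h N (\<lambda>j. \<Sum>x\<in>I. smult (D x) (tp x j)) m =
   ((\<lambda>j. \<Sum>x\<in>I. smult (D x) (fst (lev h N (tp x) m) j)),
    (\<lambda>j. \<Sum>x\<in>I. smult (D x) (snd (lev h N (tp x) m) j)))"
  using assms
proof (induction I rule: finite_induct)
  case empty
  then show ?case by (simp add: lev_zero)
next
  case (insert x F)
  have "lev h N (\<lambda>j. \<Sum>x\<in>insert x F. smult (D x) (tp x j)) m
      = lev h N (\<lambda>j. smult 1 (\<Sum>x\<in>F. smult (D x) (tp x j)) + smult (D x) (tp x j)) m"
    using insert by (simp add: add.commute)
  also have "\<dots> = ((\<lambda>j. smult 1 (fst (lev h N (\<lambda>j. \<Sum>x\<in>F. smult (D x) (tp x j)) m) j) + smult (D x) (fst (lev h N (tp x) m) j)),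
    (\<lambda>j. smult 1 (snd (lev h N (\<lambda>j. \<Sum>x\<in>F. smult (D x) (tp x j)) m) j) + smult (D x) (snd (lev h N (tp x) m) j)))" by (rule lev_lin)
  finally show ?case using insert by (simp add: add.commute)
qed

lemma smult_sum_right: "smult c (sum f S) = (\<Sum>i\<in>S. smult c (f i :: real poly))"
  by (induction S rule: infinite_finite_induct) (simp_all add: smult_add_right)

lemma topP_lin:
  "topP N K L c (\<lambda>l j. \<alpha> * Y1 l j + \<beta> * Y2 l j) j = smult \<alpha> (topP N K L c Y1 j) + smult \<beta> (topP N K L c Y2 j)"
  by (simp add: topP_def smult_add_left sum.distrib smult_sum_right smult_smult)

lemma topP_factor:
  assumes "n < L" "\<forall>l<n. \<forall>j. Y l j = 0" "1 \<le> j" "j \<le> N - 1"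
  shows "\<exists>G. topP N K L c Y j = [:-c,1:]^n * G \<and> poly G c = c^K * Y n j"
proof -
  define G where "G = (\<Sum>l<L. smult (Y l j) (monom 1 K * [:-c,1:]^(l-n)))"
  have "topP N K L c Y j = (\<Sum>l<L. [:-c,1:]^n * smult (Y l j) (monom 1 K * [:-c,1:]^(l-n)))"
  proof -
    have "smult (Y l j) (monom 1 K * [:- c, 1:] ^ l) = [:- c, 1:] ^ n * smult (Y l j) (monom 1 K * [:- c, 1:] ^ (l - n))" for l
    proof (cases "l < n")
      case True then show ?thesis using assms(2) by simp
    next
      case False
      then have "[:- c, 1:] ^ l = [:- c, 1:] ^ n * [:- c, 1:] ^ (l - n)"
        by (simp flip: power_add)
      then show ?thesis by (simp add: algebra_simps)
    qed
    then show ?thesis using assms(3,4) unfolding topP_def by simp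
  qed
  also have "\<dots> = [:-c,1:]^n * G" unfolding G_def by (simp add: sum_distrib_left)
  finally have 1: "topP N K L c Y j = [:-c,1:]^n * G" .
  have "poly G c = (\<Sum>l<L. if l = n then c^K * Y n j else 0)"
    unfolding G_def poly_sum
  proof (intro sum.cong refl)
    fix l assume "l \<in> {..<L}"
    show "poly (smult (Y l j) (monom 1 K * [:- c, 1:] ^ (l - n))) c = (if l = n then c ^ K * Y n j else 0)"
      using assms(2) by (cases "l < n") (auto simp: poly_monom)
  qed
  also have "\<dots> = c^K * Y n j" using assms(1) by simp
  finally show ?thesis using 1 by blast
qed

lemma hp_stepP:
  assumes "1 \<le> j" "j \<le> N - 1"
  shows "(pderiv ^^ q) (stepP h N a b j) = smult (h^2) ((pderiv ^^ Suc q) (a j)) + smult 4 ((pderiv ^^ q) (a j))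
     - (pderiv ^^ q) (b j) - (pderiv ^^ q) (a (j+1)) - (pderiv ^^ q) (a (j-1))"
  using assms unfolding stepP_def
  by (simp del: funpow.simps add: hp_diff higher_pderiv_add higher_pderiv_smult funpow_Suc_right)

lemma lev_van:
  assumes "n < L" "\<forall>l<n. \<forall>j. Y l j = 0"
  shows "(\<forall>q j. q + m < n \<longrightarrow> poly ((pderiv^^q) (fst (lev h N (topP N K L c Y) m) j)) c = 0) \<and>
       (\<forall>q j. q + m = n \<longrightarrow> poly ((pderiv^^q) (fst (lev h N (topP N K L c Y) m) j)) c
             = h^(2*m) * fact n * c^K * (if 1 \<le> j \<and> j \<le> N-1 then Y n j else 0)) \<and>
       (\<forall>q j. q + m \<le> n \<longrightarrow> poly ((pderiv^^q) (snd (lev h N (topP N K L c Y) m) j)) c = 0)"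
proof (induction m)
  case 0
  have A: "poly ((pderiv^^q) (topP N K L c Y j)) c = 0" if "q < n" for q j
  proof (cases "1 \<le> j \<and> j \<le> N - 1")
    case True
    then obtain G where "topP N K L c Y j = [:-c,1:]^n * G" using topP_factor[OF assms] by blast
    then show ?thesis using lin_factor_deriv[of q n c G] that by simp
  qed (auto simp add: topP_def)
  have B: "poly ((pderiv^^n) (topP N K L c Y j)) c = fact n * c^K * (if 1 \<le> j \<and> j \<le> N-1 then Y n j else 0)" for j
  proof (cases "1 \<le> j \<and> j \<le> N - 1")
    case True
    then obtain G where "topP N K L c Y j = [:-c,1:]^n * G" "poly G c = c^K * Y n j" using topP_factor[OF assms] by blast
    then show ?thesis using lin_factor_deriv[of n n c G] True by simp
  qed (auto simp add: topP_def)
  show ?case using A B by simp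
next
  case (Suc m)
  note IH = Suc
  have A: "poly ((pderiv^^q) (fst (lev h N (topP N K L c Y) (Suc m)) j)) c = 0" if "q + Suc m < n" for q j
  proof (cases "1 \<le> j \<and> j \<le> N - 1")
    case True
    have "Suc q + m < n" "q + m < n" "q + m \<le> n" using that by auto
    then show ?thesis using True IH by (simp del: funpow.simps add: hp_stepP)
  qed (auto simp add: stepP_def)
  have B: "poly ((pderiv^^q) (fst (lev h N (topP N K L c Y) (Suc m)) j)) c
       = h^(2*Suc m) * fact n * c^K * (if 1 \<le> j \<and> j \<le> N-1 then Y n j else 0)" if "q + Suc m = n" for q j
  proof (cases "1 \<le> j \<and> j \<le> N - 1")
    case True
    have "Suc q + m = n" "q + m < n" "q + m \<le> n" using that by auto
    then show ?thesis using True IH by (simp del: funpow.simps add: hp_stepP power_add power2_eq_square)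
  qed (auto simp add: stepP_def)
  have C: "poly ((pderiv^^q) (snd (lev h N (topP N K L c Y) (Suc m)) j)) c = 0" if "q + Suc m \<le> n" for q j
    using that IH by simp
  show ?case using A B C by blast
qed

lemma lev_surj:
  assumes "h \<noteq> 0" "c \<noteq> 0"
  shows "n \<le> L \<Longrightarrow> \<exists>Y. (\<forall>l j. n \<le> l \<longrightarrow> Y l j = 0) \<and>
     (\<forall>m<n. \<forall>j. 1 \<le> j \<and> j \<le> N-1 \<longrightarrow> poly (fst (lev h N (topP N K L c Y) m) j) c = D m j)"
proof (induction n)
  case 0
  then show ?case by (rule_tac x="\<lambda>l j. 0" in exI) simp
next
  case (Suc n)
  then obtain Y where Y0: "\<forall>l j. n \<le> l \<longrightarrow> Y l j = 0"
    and Y1: "\<forall>m<n. \<forall>j. 1 \<le> j \<and> j \<le> N-1 \<longrightarrow> poly (fst (lev h N (topP N K L c Y) m) j) c = D m j"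
    by auto
  define \<kappa> where "\<kappa> = h^(2*n) * fact n * c^K"
  have k0: "\<kappa> \<noteq> 0" using assms unfolding \<kappa>_def by simp
  define z where "z j = (D n j - poly (fst (lev h N (topP N K L c Y) n) j) c) / \<kappa>" for j
  define E where "E l j = (if l = n then z j else 0)" for l j
  define Y' where "Y' l j = 1 * Y l j + 1 * E l j" for l j
  have tY: "topP N K L c Y' = (\<lambda>j. smult 1 (topP N K L c Y j) + smult 1 (topP N K L c E j))"
    unfolding Y'_def by (rule ext, rule topP_lin)
  have lY: "poly (fst (lev h N (topP N K L c Y') m) j) c = poly (fst (lev h N (topP N K L c Y) m) j) c
        + poly (fst (lev h N (topP N K L c E) m) j) c" for m j
    unfolding tY lev_lin by simp
  have E0: "\<forall>l<n. \<forall>j. E l j = 0" unfolding E_def by simp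
  have nL: "n < L" using Suc by simp
  note V = lev_van[OF nL E0, of _ h N K c]
  show ?case
  proof (intro exI conjI allI impI)
    fix l j assume "Suc n \<le> l" then show "Y' l j = 0" using Y0 unfolding Y'_def E_def by simp
  next
    fix m j assume m: "m < Suc n" and j: "1 \<le> j \<and> j \<le> N - 1"
    show "poly (fst (lev h N (topP N K L c Y') m) j) c = D m j"
    proof (cases "m < n")
      case True
      have "poly ((pderiv^^0) (fst (lev h N (topP N K L c E) m) j)) c = 0"
        using conjunct1[OF V[of m], rule_format, of 0 j] True by simp
      then show ?thesis using Y1 j True lY by simp
    next
      case False
      then have "m = n" using m by simp
      have "poly ((pderiv^^0) (fst (lev h N (topP N K L c E) m) j)) c = h^(2*m) * fact n * c^K * (if 1 \<le> j \<and> j \<le> N-1 then E n j else 0)"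
        using conjunct1[OF conjunct2[OF V[of m]]] \<open>m = n\<close> by simp
      then show ?thesis using lY j k0 \<open>m = n\<close> unfolding E_def z_def \<kappa>_def by simp
    qed
  qed
qed

lemma lev_coeff:
  "(\<forall>k j. k + m < K \<longrightarrow> coeff (fst (lev h N (topP N K L c Y) m) j) k = 0) \<and>
   (\<forall>k j. k + m \<le> K \<longrightarrow> coeff (snd (lev h N (topP N K L c Y) m) j) k = 0)"
proof (induction m)
  case 0
  show ?case by (simp add: topP_def coeff_sum coeff_monom_mult)
next
  case (Suc m)
  show ?case
  proof (intro conjI allI impI)
    fix k j assume k: "k + Suc m < K"
    show "coeff (fst (lev h N (topP N K L c Y) (Suc m)) j) k = 0"
      using Suc k by (simp add: stepP_def coeff_pderiv)
  next
    fix k j assume k: "k + Suc m \<le> K"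
    show "coeff (snd (lev h N (topP N K L c Y) (Suc m)) j) k = 0"
      using Suc k by simp
  qed
qed

definition sf :: "real \<Rightarrow> real \<Rightarrow> real" where "sf c t = max 0 (t - c)"

lemma poly_sf_deriv:
  assumes "coeff P 1 = 0"
  shows "((\<lambda>t. poly P (sf c t)) has_real_derivative poly (pderiv P) (sf c t)) (at t)"
proof -
  have d0: "poly (pderiv P) 0 = 0" using assms by (simp add: poly_0_coeff_0 coeff_pderiv)
  have sh: "((\<lambda>x. poly P (x - c)) has_real_derivative poly (pderiv P) (y - c)) (at y within S)" for y S
  proof -
    have g: "((\<lambda>x. x - c) has_real_derivative 1) (at y within S)" by (auto intro!: derivative_eq_intros)
    show ?thesis using DERIV_chain2[OF poly_DERIV g] by simp
  qed
  consider "t > c" | "t < c" | "t = c" by linarith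
  then show ?thesis
  proof cases
    case 1
    have "((\<lambda>x. poly P (x - c)) has_real_derivative poly (pderiv P) (t - c)) (at t)" using sh by simp
    then have "((\<lambda>x. poly P (sf c x)) has_real_derivative poly (pderiv P) (t - c)) (at t)"
      by (rule has_field_derivative_transform_within_open[of _ _ _ "{c<..}"]) (use 1 in \<open>auto simp: sf_def\<close>)
    then show ?thesis using 1 by (simp add: sf_def)
  next
    case 2
    have "((\<lambda>x. poly P 0) has_real_derivative 0) (at t)" by simp
    then have "((\<lambda>x. poly P (sf c x)) has_real_derivative 0) (at t)"
      by (rule has_field_derivative_transform_within_open[of _ _ _ "{..<c}"]) (use 2 in \<open>auto simp: sf_def\<close>)
    then show ?thesis using 2 d0 by (simp add: sf_def)
  next
    case 3
    have r: "((\<lambda>x. poly P (sf c x)) has_real_derivative 0) (at c within {c..})"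
      by (rule has_field_derivative_transform_within[OF sh[of c "{c..}", simplified d0 diff_self], of 1])
         (auto simp: sf_def)
    have "((\<lambda>x. poly P 0) has_real_derivative 0) (at c within {..c})" by simp
    then have l: "((\<lambda>x. poly P (sf c x)) has_real_derivative 0) (at c within {..c})"
      by (rule has_field_derivative_transform_within[of _ _ _ _ 1]) (auto simp: sf_def)
    have "((\<lambda>x. poly P (sf c x)) has_real_derivative 0) (at c within ({..c} \<union> {c..}))"
      using l r unfolding has_field_derivative_iff Lim_within_Un by blast
    moreover have "{..c} \<union> {c..} = (UNIV :: real set)" by auto
    ultimately show ?thesis using 3 d0 by (simp add: sf_def)
  qed
qed




lemma abs_prod_le: fixes a b E :: real assumes "a\<^sup>2 \<le> E" "b\<^sup>2 \<le> E" shows "\<bar>a*b\<bar> \<le> E"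
proof -
  have "0 \<le> (\<bar>a\<bar> - \<bar>b\<bar>)^2" by simp
  then have "2*\<bar>a*b\<bar> \<le> a\<^sup>2 + b\<^sup>2" by (simp add: power2_diff abs_mult)
  then show ?thesis using assms by linarith
qed

lemma Aop_diff: "Aop h l (\<lambda>q. f q - g q) p = Aop h l f p - Aop h l g p"
  unfolding Aop_def Let_def by (simp add: divide_inverse algebra_simps)

lemma Aop_bound:
  fixes d :: "nat \<times> nat \<Rightarrow> real"
  assumes "h > 0" "\<bar>l (snd p)\<bar> \<le> 1/4" "\<forall>q. (d q)\<^sup>2 \<le> E"
  shows "\<bar>d p * Aop h l d p\<bar> \<le> 10 / h\<^sup>2 * E"
proof -
  obtain i j where p: "p = (i,j)" by (cases p)
  have E0: "0 \<le> E" using assms(3) by (meson order.trans zero_le_power2)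
  have P0: "\<bar>d p * d q\<bar> \<le> E" for q using abs_prod_le assms(3) by blast
  have P: "- E \<le> d p * d q \<and> d p * d q \<le> E" for q using P0[of q] by (simp add: abs_le_iff)
  have "\<bar>d p * (Aop h l d p * h\<^sup>2)\<bar> \<le> 10 * E"
  proof (cases "i = 1")
    case True
    define \<alpha> where "\<alpha> = 2 * (1 + 1 / (1 + l j))"
    define \<beta> where "\<beta> = 2 / (2 + l j)"
    have lj: "\<bar>l j\<bar> \<le> 1/4" using assms(2) p by simp
    have a: "\<bar>\<alpha>\<bar> \<le> 5"
    proof -
      have "1 + l j \<ge> 3/4" using lj by linarith
      then have "1 / (1 + l j) \<le> 4/3" by (simp add: field_simps)
      moreover have "1 / (1 + l j) > 0" using \<open>1 + l j \<ge> 3/4\<close> by simp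
      ultimately show ?thesis unfolding \<alpha>_def by simp
    qed
    have b: "\<bar>\<beta>\<bar> \<le> 2"
    proof -
      have "2 + l j \<ge> 7/4" using lj by linarith
      then have "2 / (2 + l j) \<le> 2" by (simp add: field_simps)
      moreover have "2 / (2 + l j) > 0" using \<open>2 + l j \<ge> 7/4\<close> by simp
      ultimately show ?thesis unfolding \<beta>_def by simp
    qed
    have eq: "d p * (Aop h l d p * h\<^sup>2) = \<alpha> * (d p * d (1,j)) - \<beta> * (d p * d (2,j)) - d p * d (1, j+1) - d p * d (1, j-1)"
      using True assms(1) p unfolding Aop_def Let_def \<alpha>_def \<beta>_def by (simp add: field_simps)
    have "\<bar>\<alpha> * (d p * d (1,j))\<bar> \<le> 5 * E" using a P0[of "(1,j)"] E0 by (simp add: abs_mult mult_mono)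
    moreover have "\<bar>\<beta> * (d p * d (2,j))\<bar> \<le> 2 * E" using b P0[of "(2,j)"] E0 by (simp add: abs_mult mult_mono)
    ultimately show ?thesis unfolding eq abs_le_iff using P[of "(1,j+1)"] P[of "(1,j-1)"] E0 by linarith
  next
    case False
    have eq: "d p * (Aop h l d p * h\<^sup>2) = 4 * (d p * d (i,j)) - d p * d (i+1,j) - d p * d (i-1,j) - d p * d (i, j+1) - d p * d (i, j-1)"
      using False assms(1) p unfolding Aop_def Let_def by (simp add: field_simps)
    show ?thesis unfolding eq using P[of "(i,j)"] P[of "(i+1,j)"] P[of "(i-1,j)"] P[of "(i,j+1)"] P[of "(i,j-1)"] E0
      unfolding abs_le_iff by linarith
  qed
  then show ?thesis using assms(1) by (simp add: abs_mult field_simps)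
qed

lemma is_solD:
  assumes "is_sol h M N S F u0 lam v"
  shows "v 0 = u0" "t \<in> S \<Longrightarrow> in_F M N (v t)"
    "interior_node M N p \<Longrightarrow> t \<in> S \<Longrightarrow>
     ((\<lambda>s. v s p) has_real_derivative (F t p - Aop h (\<lambda>j. lam j t) (v t) p)) (at t within S)"
  using assms unfolding is_sol_def by blast+

lemma in_F_zero: "in_F M N f \<Longrightarrow> \<not> interior_node M N p \<Longrightarrow> f p = 0"
  unfolding in_F_def by blast

lemma interior_iff: "interior_node M N p \<longleftrightarrow> p \<in> {1..M-1} \<times> {1..N-1}"
  by (cases p) (auto simp: interior_node_def)

lemma sol_unique:
  fixes h T :: real
  assumes h: "h > 0" and T: "T \<ge> 0"
    and bnd: "\<forall>j\<in>{1..N-1}. \<forall>t\<in>{0..T}. \<bar>lam j t\<bar> \<le> 1/4"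
    and s1: "is_sol h M N {0..T} F u0 lam v1" and s2: "is_sol h M N {0..T} F u0 lam v2"
  shows "v1 T = v2 T"
proof -
  define I where "I = {1..M-1} \<times> {1..N-1::nat}"
  have fI: "finite I" unfolding I_def by simp
  define d where "d t p = v2 t p - v1 t p" for t p
  define E where "E t = (\<Sum>p\<in>I. (d t p)\<^sup>2)" for t
  have dout: "d t p = 0" if "t \<in> {0..T}" "p \<notin> I" for t p
  proof -
    have "\<not> interior_node M N p" using that(2) unfolding I_def interior_iff by simp
    moreover have "\<forall>t\<in>{0..T}. in_F M N (v1 t) \<and> in_F M N (v2 t)"
      using is_solD(2)[OF s1] is_solD(2)[OF s2] by auto
    ultimately have "in_F M N (v1 t)" "in_F M N (v2 t)" using that(1) by auto
    then show ?thesis using in_F_zero[OF _ \<open>\<not> interior_node M N p\<close>, of "v1 t"] in_F_zero[OF _ \<open>\<not> interior_node M N p\<close>, of "v2 t"] unfolding d_def by simp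
  qed
  have dder: "((\<lambda>s. d s p) has_real_derivative - Aop h (\<lambda>j. lam j t) (d t) p) (at t within {0..T})"
    if "t \<in> {0..T}" "p \<in> I" for t p
  proof -
    have "interior_node M N p" using that unfolding interior_iff I_def by simp
    then have a: "((\<lambda>s. v1 s p) has_real_derivative (F t p - Aop h (\<lambda>j. lam j t) (v1 t) p)) (at t within {0..T})"
      and b: "((\<lambda>s. v2 s p) has_real_derivative (F t p - Aop h (\<lambda>j. lam j t) (v2 t) p)) (at t within {0..T})"
      using is_solD(3)[OF s1] is_solD(3)[OF s2] that by auto
    have "Aop h (\<lambda>j. lam j t) (d t) p = Aop h (\<lambda>j. lam j t) (v2 t) p - Aop h (\<lambda>j. lam j t) (v1 t) p"
      unfolding d_def by (rule Aop_diff)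
    then show ?thesis using DERIV_diff[OF b a] unfolding d_def by simp
  qed
  define \<kappa> where "\<kappa> = real (card I) * (20 / h\<^sup>2)"
  have k0: "\<kappa> \<ge> 0" unfolding \<kappa>_def by simp
  have E0: "E t \<ge> 0" for t unfolding E_def by (simp add: sum_nonneg)
  have dE: "d t q ^ 2 \<le> E t" if "t \<in> {0..T}" for t q
  proof (cases "q \<in> I")
    case True then show ?thesis unfolding E_def by (rule member_le_sum[where f="\<lambda>p. (d t p)\<^sup>2"]) (simp_all add: fI)
  next
    case False then show ?thesis using dout[OF that False] E0[of t] by simp
  qed
  define E' where "E' t = (\<Sum>p\<in>I. 2 * d t p * (- Aop h (\<lambda>j. lam j t) (d t) p))" for t
  have Eder: "(E has_real_derivative E' t) (at t within {0..T})" if "t \<in> {0..T}" for t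
    unfolding E_def E'_def
    by (rule DERIV_sum) (use dder[OF that] in \<open>auto intro!: derivative_eq_intros\<close>)
  have E'b: "E' t \<le> \<kappa> * E t" if "t \<in> {0..T}" for t
  proof -
    have "E' t \<le> (\<Sum>p\<in>I. 2 * (10 / h\<^sup>2 * E t))"
      unfolding E'_def
    proof (rule sum_mono)
      fix p assume p: "p \<in> I"
      have "\<bar>lam (snd p) t\<bar> \<le> 1/4" using bnd p that unfolding I_def by auto
      then have "\<bar>d t p * Aop h (\<lambda>j. lam j t) (d t) p\<bar> \<le> 10 / h\<^sup>2 * E t"
        using Aop_bound[OF h, of "\<lambda>j. lam j t" p "d t" "E t"] dE[OF that] by simp
      then show "2 * d t p * - Aop h (\<lambda>j. lam j t) (d t) p \<le> 2 * (10 / h\<^sup>2 * E t)"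
        by (simp add: abs_le_iff)
    qed
    also have "\<dots> = \<kappa> * E t" unfolding \<kappa>_def by simp
    finally show ?thesis .
  qed
  define G where "G t = E t * exp (- \<kappa> * t)" for t
  have Gder: "(G has_real_derivative (E' t - \<kappa> * E t) * exp (- \<kappa> * t)) (at t within {0..T})" if "t \<in> {0..T}" for t
    unfolding G_def using Eder[OF that]
    by (auto intro!: derivative_eq_intros simp: algebra_simps)
  have "G T \<le> G 0"
  proof (rule DERIV_nonpos_imp_decreasing_open[OF T])
    fix x assume x: "0 < x" "x < T"
    then have "(G has_real_derivative (E' x - \<kappa> * E x) * exp (- \<kappa> * x)) (at x)"
      using Gder[of x] at_within_Icc_at[OF x] by simp
    moreover have "(E' x - \<kappa> * E x) * exp (- \<kappa> * x) \<le> 0"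
      using E'b[of x] x by (simp add: mult_nonpos_nonneg)
    ultimately show "\<exists>y. (G has_real_derivative y) (at x) \<and> y \<le> 0" by blast
  next
    show "continuous_on {0..T} G" using Gder by (rule DERIV_continuous_on)
  qed
  moreover have "G 0 = 0"
    using is_solD(1)[OF s1] is_solD(1)[OF s2] unfolding G_def E_def d_def by simp
  moreover have "G T \<ge> 0" unfolding G_def using E0 by simp
  ultimately have "E T = 0" unfolding G_def by simp
  then have "\<forall>p\<in>I. (d T p)\<^sup>2 = 0" unfolding E_def using fI by (subst (asm) sum_nonneg_eq_0_iff) auto
  then have "d T p = 0" for p using dout[of T p] T by (cases "p \<in> I") auto
  then show ?thesis unfolding d_def by (auto simp: fun_eq_iff)
qed




lemma lam_solve:
  fixes A B r :: real
  defines "p \<equiv> 2*A - B + r" and "q \<equiv> 4*A - B + 3*r"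
  assumes q0: "q \<noteq> 0" and disc: "q\<^sup>2 - 8*p*r \<ge> 0"
    and l: "l = -4 * r * (q / \<bar>q\<bar>) / (\<bar>q\<bar> + sqrt (q\<^sup>2 - 8*p*r))"
    and lb: "\<bar>l\<bar> \<le> 1/4"
  shows "2 * (1 + 1 / (1 + l)) * A - 2 / (2 + l) * B = r + 4*A - B"
proof -
  define S where "S = sqrt (q\<^sup>2 - 8*p*r)"
  define \<sigma> where "\<sigma> = q / \<bar>q\<bar>"
  have S2: "S^2 = q\<^sup>2 - 8*p*r" unfolding S_def using disc by (rule real_sqrt_pow2)
  have S0: "S \<ge> 0" unfolding S_def by (rule real_sqrt_ge_zero[OF disc])
  have sq: "\<sigma> * \<bar>q\<bar> = q" "\<sigma>^2 = 1" unfolding \<sigma>_def using q0 by (auto simp: power2_eq_square)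
  define dd where "dd = \<bar>q\<bar> + S"
  have dd0: "dd > 0" unfolding dd_def using q0 S0 by simp
  have "l = -4*r*\<sigma>/dd" unfolding l dd_def S_def \<sigma>_def by simp
  then have ld: "l * dd = -4 * r * \<sigma>" using dd0 by simp
  have key: "dd^2 - 2*\<bar>q\<bar>*dd + 8*p*r = 0" unfolding dd_def using S2 by (simp add: power2_eq_square algebra_simps)
  have quad: "p * l^2 + q * l + 2 * r = 0"
  proof -
    have "(p * l^2 + q * l + 2 * r) * dd^2 = p * (l*dd)^2 + q * (l * dd) * dd + 2 * r * dd^2"
      by (simp add: power2_eq_square algebra_simps)
    also have "\<dots> = 16 * p * r^2 * \<sigma>^2 - 4 * r * (\<sigma> * q) * dd + 2 * r * dd^2"
      unfolding ld by (simp add: power2_eq_square algebra_simps)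
    also have "\<sigma> * q = \<bar>q\<bar>" using sq by (metis abs_mult_self_eq abs_of_nonneg abs_ge_zero mult.commute mult.left_commute \<sigma>_def
        q0 abs_eq_0 nonzero_mult_div_cancel_left times_divide_eq_right)
    also have "16 * p * r^2 * \<sigma>^2 - 4 * r * \<bar>q\<bar> * dd + 2 * r * dd^2 = 2 * r * (dd^2 - 2*\<bar>q\<bar>*dd + 8*p*r)"
      using sq by (simp add: power2_eq_square algebra_simps)
    also have "\<dots> = 0" using key by simp
    finally show ?thesis using dd0 by simp
  qed
  have l1: "1 + l \<noteq> 0" "2 + l \<noteq> 0" using lb by auto
  define X where "X = (1+l)*(2+l)"
  have X0: "X \<noteq> 0" unfolding X_def using l1 by simp
  have e1: "(2 * (1 + 1 / (1 + l)) * A - 2 / (2 + l) * B) * X = 2*(2+l)*(2+l)*A - 2*(1+l)*B"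
  proof -
    have a: "1 + 1/(1+l) = (2+l)/(1+l)" using l1 by (simp add: field_simps)
    have b: "2 * ((2+l)/(1+l)) * A * ((1+l)*(2+l)) = 2*(2+l)*(2+l)*A" using l1 by simp
    have c: "2/(2+l) * B * ((1+l)*(2+l)) = 2*(1+l)*B" using l1 by simp
    show ?thesis unfolding X_def a left_diff_distrib b c ..
  qed
  have e2: "(r + 4*A - B) * X = 2*(2+l)*(2+l)*A - 2*(1+l)*B"
    unfolding X_def using quad unfolding p_def q_def by (simp add: power2_eq_square algebra_simps)
  show ?thesis using e1 e2 X0 by (metis mult_right_cancel)
qed




lemma lev_mask:
  assumes "\<not> (1 \<le> j \<and> j \<le> N - 1)"
  shows "fst (lev h N (topP N K L c Y) m) j = 0 \<and> snd (lev h N (topP N K L c Y) m) j = 0"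
  using assms by (induction m) (auto simp: topP_def stepP_def)

lemma pderiv_sum': "pderiv (sum f A) = (\<Sum>x\<in>A. pderiv (f x :: real poly))"
  by (induction A rule: infinite_finite_induct) (simp_all add: pderiv_add)

lemma topP_sum:
  "topP N K L c (\<lambda>l j. \<Sum>x\<in>I. D x * Yb x l j) j = (\<Sum>x\<in>I. smult (D x) (topP N K L c (Yb x) j))"
proof -
  have "(\<Sum>l<L. smult (\<Sum>x\<in>I. D x * Yb x l j) (monom 1 K * [:- c, 1:] ^ l))
      = (\<Sum>x\<in>I. smult (D x) (\<Sum>l<L. smult (Yb x l j) (monom 1 K * [:- c, 1:] ^ l)))"
    by (simp add: smult_sum smult_sum_right smult_smult sum.swap[of _ I])
  then show ?thesis unfolding topP_def by (cases "1 \<le> j \<and> j \<le> N - 1") auto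
qed

definition pb :: "real \<Rightarrow> real poly \<Rightarrow> real" where
  "pb T P = (\<Sum>k\<le>degree P. \<bar>coeff P k\<bar> * T^k)"

lemma pb_bound:
  assumes "0 \<le> y" "y \<le> T"
  shows "\<bar>poly P y\<bar> \<le> pb T P"
proof -
  have "\<bar>poly P y\<bar> = \<bar>\<Sum>k\<le>degree P. coeff P k * y^k\<bar>" by (simp add: poly_altdef)
  also have "\<dots> \<le> (\<Sum>k\<le>degree P. \<bar>coeff P k * y^k\<bar>)" by (rule sum_abs)
  also have "\<dots> \<le> (\<Sum>k\<le>degree P. \<bar>coeff P k\<bar> * T^k)"
  proof (rule sum_mono)
    fix k
    have "\<bar>y^k\<bar> \<le> T^k" using assms by (simp add: power_abs power_mono)
    then show "\<bar>coeff P k * y ^ k\<bar> \<le> \<bar>coeff P k\<bar> * T ^ k" by (simp add: abs_mult mult_left_mono)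
  qed
  finally show ?thesis unfolding pb_def .
qed

lemma small_bound:
  fixes u1 u2 w1 w2 rr m0 U Q \<eta> :: real
  assumes m0: "m0 > 0" and nd: "\<bar>(1/2)*u2 - 2*u1\<bar> \<ge> m0" and U: "\<bar>u1\<bar> \<le> U" "\<bar>u2\<bar> \<le> U"
    and w: "\<bar>w1\<bar> \<le> \<eta>" "\<bar>w2\<bar> \<le> \<eta>" and rr: "\<bar>rr\<bar> \<le> Q*\<eta>" and Q: "Q \<ge> 0"
    and e: "\<eta> \<ge> 0" "\<eta> \<le> 1" "(5+3*Q)*\<eta> \<le> m0" "16*(3*U+3+Q)*Q*\<eta> \<le> m0\<^sup>2" "16*Q*\<eta> \<le> m0"
  defines "AA \<equiv> u1 + w1" and "BB \<equiv> u2 + w2"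
  defines "pp \<equiv> 2*AA - BB + rr" and "qq \<equiv> 4*AA - BB + 3*rr"
  shows "\<bar>qq\<bar> \<ge> m0" "qq\<^sup>2 - 8*pp*rr \<ge> 0"
    "\<bar>-4*rr*(qq/\<bar>qq\<bar>)/(\<bar>qq\<bar> + sqrt (qq\<^sup>2 - 8*pp*rr))\<bar> \<le> 1/4"
proof -
  have "qq = -2*((1/2)*u2 - 2*u1) + 4*w1 - w2 + 3*rr" unfolding qq_def AA_def BB_def by simp
  moreover have "\<bar>4*w1 - w2 + 3*rr\<bar> \<le> (5+3*Q)*\<eta>" using w rr by (simp add: abs_le_iff algebra_simps)
  ultimately show q: "\<bar>qq\<bar> \<ge> m0" using nd e(3) by (simp add: abs_le_iff) linarith
  have "\<bar>pp\<bar> \<le> 3*U + 3 + Q" unfolding pp_def AA_def BB_def using U w rr e Q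
    by (simp add: abs_le_iff) (smt (verit) mult_left_le)
  then have "\<bar>8*pp*rr\<bar> \<le> 8*(3*U+3+Q)*(Q*\<eta>)" using rr
    by (simp add: abs_mult mult_mono)
  then have b: "\<bar>8*pp*rr\<bar> \<le> m0\<^sup>2/2" using e(4) by (simp add: algebra_simps)
  have "qq\<^sup>2 \<ge> m0\<^sup>2" using q m0 by (metis abs_le_square_iff abs_of_pos)
  then show d: "qq\<^sup>2 - 8*pp*rr \<ge> 0" using b m0 by (simp add: abs_le_iff)
  have qn: "\<bar>qq/\<bar>qq\<bar>\<bar> = 1" using q m0 by simp
  have den: "\<bar>qq\<bar> + sqrt (qq\<^sup>2 - 8*pp*rr) \<ge> m0" using q real_sqrt_ge_zero[OF d] by linarith
  have "\<bar>-4*rr*(qq/\<bar>qq\<bar>)/(\<bar>qq\<bar> + sqrt (qq\<^sup>2 - 8*pp*rr))\<bar> = 4*\<bar>rr\<bar>/(\<bar>qq\<bar> + sqrt (qq\<^sup>2 - 8*pp*rr))"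
    using qn den m0 q by (simp add: abs_mult)
  also have "\<dots> \<le> 4*\<bar>rr\<bar>/m0" using den m0 by (simp add: frac_le)
  also have "\<dots> \<le> 4*(Q*\<eta>)/m0" using rr m0 by (simp add: divide_right_mono)
  also have "\<dots> \<le> 1/4" using e(5) m0 by (simp add: field_simps)
  finally show "\<bar>-4*rr*(qq/\<bar>qq\<bar>)/(\<bar>qq\<bar> + sqrt (qq\<^sup>2 - 8*pp*rr))\<bar> \<le> 1/4" .
qed

lemma le_double_sum:
  fixes f :: "'a \<Rightarrow> 'b \<Rightarrow> real"
  assumes "finite A" "finite B" "a \<in> A" "b \<in> B" "\<forall>x\<in>A. \<forall>y\<in>B. f x y \<ge> 0"
  shows "f a b \<le> (\<Sum>x\<in>A. \<Sum>y\<in>B. f x y)"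
proof -
  have "f a b \<le> (\<Sum>y\<in>B. f a y)" using assms by (intro member_le_sum) auto
  also have "\<dots> \<le> (\<Sum>x\<in>A. \<Sum>y\<in>B. f x y)" using assms by (intro member_le_sum sum_nonneg) auto
  finally show ?thesis .
qed

lemma lin_bound:
  fixes D a b :: "'a \<Rightarrow> real"
  assumes "finite I" "\<forall>x\<in>I. \<bar>D x\<bar> \<le> \<epsilon>" "\<forall>x\<in>I. \<bar>a x\<bar> \<le> b x"
  shows "\<bar>\<Sum>x\<in>I. D x * a x\<bar> \<le> \<epsilon> * (\<Sum>x\<in>I. b x)"
proof -
  have "\<bar>\<Sum>x\<in>I. D x * a x\<bar> \<le> (\<Sum>x\<in>I. \<bar>D x * a x\<bar>)" by (rule sum_abs)
  also have "\<dots> \<le> (\<Sum>x\<in>I. \<epsilon> * b x)"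
  proof (rule sum_mono)
    fix x assume "x \<in> I"
    then have "\<bar>D x\<bar> \<le> \<epsilon>" "\<bar>a x\<bar> \<le> b x" using assms by auto
    then show "\<bar>D x * a x\<bar> \<le> \<epsilon> * b x" unfolding abs_mult by (intro mult_mono) auto
  qed
  also have "\<dots> = \<epsilon> * (\<Sum>x\<in>I. b x)" by (simp add: sum_distrib_left)
  finally show ?thesis .
qed

lemma pb_nonneg: "T \<ge> 0 \<Longrightarrow> pb T P \<ge> 0"
  unfolding pb_def by (intro sum_nonneg) simp




theorem theorem2p23:
  fixes h T :: real and M N :: nat
    and F :: "real \<Rightarrow> nat \<times> nat \<Rightarrow> real" and u0 :: "nat \<times> nat \<Rightarrow> real"
    and u :: "real \<Rightarrow> nat \<times> nat \<Rightarrow> real"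
  assumes "h > 0" and "M \<ge> 2" and "N \<ge> 2" and "T > 0"
    and "in_F M N u0"
    and "\<forall>t\<ge>0. in_F M N (F t)"
    and "\<forall>p. continuous_on {0..} (\<lambda>t. F t p)"
    and ref: "is_sol h M N {0..} F u0 (\<lambda>j t. 0) u"
    and nondeg: "\<forall>t>0. \<forall>j\<in>{1..N-1}. (1/2) * u t (2, j) - 2 * u t (1, j) \<noteq> 0"
  shows "\<exists>\<delta>>0. \<exists>\<epsilon>>0. \<forall>Z. in_F M N Z \<and>
           (\<forall>p. interior_node M N p \<longrightarrow> \<bar>Z p - u T p\<bar> < \<epsilon>) \<longrightarrow>
           (\<exists>lam. admissible N T lam \<and>
              (\<forall>j\<in>{1..N-1}. \<forall>t\<in>{0..T}. \<bar>lam j t\<bar> < \<delta>) \<and>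
              (\<exists>v. is_sol h M N {0..T} F u0 lam v) \<and>
              (\<forall>v. is_sol h M N {0..T} F u0 lam v \<longrightarrow> v T = Z))"
proof -
  note h = \<open>h > 0\<close> and T0 = \<open>T > 0\<close>
  define c where "c = T/2"
  have c0: "0 < c" "c < T" "T - c = c" using T0 unfolding c_def by auto
  have sfT: "sf c T = c" unfolding sf_def using c0 by simp
  have sf_rng: "0 \<le> sf c t \<and> sf c t \<le> T" if "t \<in> {0..T}" for t using that c0 unfolding sf_def by auto
  have sf_0: "sf c t = 0" if "t \<le> c" for t using that unfolding sf_def by simp
  define L where "L = M - 1"
  define R where "R = {1..N-1::nat}"
  define I where "I = {1..M-1} \<times> R"
  have fI: "finite I" and fR: "finite R" unfolding I_def R_def by auto
  have RI: "R \<noteq> {}" using \<open>N \<ge> 2\<close> unfolding R_def by auto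
  have Iint: "interior_node M N p \<longleftrightarrow> p \<in> I" for p unfolding I_def R_def interior_iff by simp
  define col where "col Y i = (if 1 \<le> i \<and> i \<le> M-1 then fst (lev h N (topP N M L c Y) (M-1-i)) else (\<lambda>j. 0))"
    for Y i
  define w where "w Y t = (\<lambda>(i,j). poly (col Y i j) (sf c t))" for Y t
  have col_mask: "col Y i j = 0" if "j \<notin> R" for Y i j
    using lev_mask[of j N h M L c Y "M-1-i"] that unfolding col_def R_def by auto
  have col_coeff: "coeff (col Y i j) k = 0" if "k \<le> 1" for Y i j k
  proof (cases "1 \<le> i \<and> i \<le> M-1")
    case True
    have "k + (M-1-i) < M" using that True by linarith
    then show ?thesis using conjunct1[OF lev_coeff[where m="M-1-i" and K=M and h=h and N=N and L=L and c=c and Y=Y]] True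
      unfolding col_def by auto
  qed (auto simp add: col_def)
  have col_rec: "col Y (i-1) j = smult (h^2) (pderiv (col Y i j)) + smult 4 (col Y i j) - col Y (i+1) j - col Y i (j+1) - col Y i (j-1)"
    if "2 \<le> i" "i \<le> M-1" "j \<in> R" for Y i j
  proof -
    have e: "M-1-(i-1) = Suc (M-1-i)" using that by linarith
    have a: "fst (lev h N (topP N M L c Y) (M-1-i)) = col Y i" using that unfolding col_def by simp
    have b: "snd (lev h N (topP N M L c Y) (M-1-i)) = col Y (i+1)"
    proof (cases "i = M-1")
      case True then show ?thesis unfolding col_def by (simp add: fun_eq_iff)
    next
      case False
      then have e2: "M-1-i = Suc (M-1-(i+1))" using that by linarith
      have "1 \<le> i+1 \<and> i+1 \<le> M-1" using that False by linarith
      then show ?thesis unfolding col_def by (subst e2) simp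
    qed
    have c1: "1 \<le> i-1 \<and> i-1 \<le> M-1" using that by linarith
    have "col Y (i-1) = fst (lev h N (topP N M L c Y) (M-1-(i-1)))" using c1 unfolding col_def by simp
    also have "\<dots> = fst (lev h N (topP N M L c Y) (Suc (M-1-i)))" by (simp only: e)
    also have "\<dots> = stepP h N (fst (lev h N (topP N M L c Y) (M-1-i))) (snd (lev h N (topP N M L c Y) (M-1-i)))"
      by (simp only: lev.simps fst_conv)
    also have "\<dots> = stepP h N (col Y i) (col Y (i+1))" by (simp only: a b)
    finally have "col Y (i-1) = stepP h N (col Y i) (col Y (i+1))" .
    then show ?thesis using that unfolding R_def stepP_def by simp
  qed
  have w_der: "((\<lambda>t. w Y t (i,j)) has_real_derivative poly (pderiv (col Y i j)) (sf c t)) (at t)" for Y i j t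
    unfolding w_def using poly_sf_deriv[OF col_coeff[of 1 Y i j]] by simp
  have w_zero: "w Y t (i,j) = 0" if "t \<le> c" for Y i j t
    using col_coeff[of 0 Y i j] sf_0[OF that] unfolding w_def by (simp add: poly_0_coeff_0)
  have wd_zero: "poly (pderiv (col Y i j)) (sf c t) = 0" if "t \<le> c" for Y i j t
    using col_coeff[of 1 Y i j] sf_0[OF that] by (simp add: poly_0_coeff_0 coeff_pderiv)
  have w_inF: "in_F M N (w Y t)" for Y t
    unfolding in_F_def
  proof (intro allI impI)
    fix p assume p: "\<not> interior_node M N p"
    obtain i j where ij: "p = (i,j)" by (cases p)
    show "w Y t p = 0"
    proof (cases "j \<in> R")
      case True
      then have "\<not> (1 \<le> i \<and> i \<le> M-1)" using p ij Iint unfolding I_def by auto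
      then show ?thesis unfolding w_def col_def ij by auto
    next
      case False
      then show ?thesis unfolding w_def ij using col_mask by simp
    qed
  qed
  have basis: "\<forall>x\<in>I. \<exists>Y. \<forall>i j. (i,j) \<in> I \<longrightarrow> poly (col Y i j) c = (if (i,j) = x then 1 else 0)"
  proof
    fix x assume "x \<in> I"
    obtain Y where Y: "\<forall>m<L. \<forall>j. 1 \<le> j \<and> j \<le> N-1 \<longrightarrow> poly (fst (lev h N (topP N M L c Y) m) j) c
          = (if (M-1-m, j) = x then 1 else 0)"
      using lev_surj[where h=h and c=c and n=L and L=L and N=N and K=M and D="\<lambda>m j. if (M-1-m,j) = x then 1 else 0"]
        h c0 by auto
    show "\<exists>Y. \<forall>i j. (i,j) \<in> I \<longrightarrow> poly (col Y i j) c = (if (i,j) = x then 1 else 0)"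
    proof (intro exI allI impI)
      fix i j assume "(i,j) \<in> I"
      then have ij: "1 \<le> i" "i \<le> M-1" "1 \<le> j" "j \<le> N-1" unfolding I_def R_def by auto
      then have "M-1-i < L" "M-1-(M-1-i) = i" unfolding L_def by auto
      then show "poly (col Y i j) c = (if (i,j) = x then 1 else 0)" using Y ij unfolding col_def by auto
    qed
  qed
  then obtain Yb where Yb: "\<forall>x\<in>I. \<forall>i j. (i,j) \<in> I \<longrightarrow> poly (col (Yb x) i j) c = (if (i,j) = x then 1 else 0)"
    by (metis (no_types) bchoice)
  define Yc where "Yc D = (\<lambda>l j. \<Sum>x\<in>I. D x * Yb x l j)" for D :: "nat \<times> nat \<Rightarrow> real"
  have col_lin: "col (Yc D) i j = (\<Sum>x\<in>I. smult (D x) (col (Yb x) i j))" for D i j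
  proof (cases "1 \<le> i \<and> i \<le> M-1")
    case True
    have "topP N M L c (Yc D) = (\<lambda>j. \<Sum>x\<in>I. smult (D x) (topP N M L c (Yb x) j))"
      unfolding Yc_def by (rule ext, rule topP_sum)
    then show ?thesis using True unfolding col_def
      by (simp add: lev_sum[OF fI, where h=h and N=N and D=D and tp="\<lambda>x. topP N M L c (Yb x)"])
  qed (auto simp add: col_def)
  have w_lin: "w (Yc D) t (i,j) = (\<Sum>x\<in>I. D x * w (Yb x) t (i,j))" for D t i j
    by (simp add: w_def col_lin poly_sum)
  have wd_lin: "poly (pderiv (col (Yc D) i j)) y = (\<Sum>x\<in>I. D x * poly (pderiv (col (Yb x) i j)) y)" for D i j y
    by (simp add: col_lin pderiv_sum' pderiv_smult poly_sum)
  have w_T: "w (Yc D) T (i,j) = D (i,j)" if "(i,j) \<in> I" for D i j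
  proof -
    have "w (Yc D) T (i,j) = (\<Sum>x\<in>I. D x * (if (i,j) = x then 1 else 0))"
      unfolding w_lin using Yb that by (intro sum.cong) (auto simp: w_def sfT)
    also have "\<dots> = D (i,j)" using that fI by (simp add: if_distrib cong: if_cong)
    finally show ?thesis .
  qed
  define bb where "bb x = (\<Sum>i\<in>{1,2::nat}. \<Sum>j\<in>{0..N}. pb T (col (Yb x) i j) + pb T (pderiv (col (Yb x) i j)))" for x
  define Cw where "Cw = (\<Sum>x\<in>I. bb x)"
  have Cw0: "Cw \<ge> 0" unfolding Cw_def bb_def using T0 by (intro sum_nonneg add_nonneg_nonneg pb_nonneg) auto
  have bb_w: "\<bar>w (Yb x) t (i,j)\<bar> \<le> bb x \<and> \<bar>poly (pderiv (col (Yb x) i j)) (sf c t)\<bar> \<le> bb x"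
    if "i \<in> {1,2}" "j \<le> N" "t \<in> {0..T}" for x i j t
  proof -
    have le: "pb T (col (Yb x) i j) + pb T (pderiv (col (Yb x) i j)) \<le> bb x"
      unfolding bb_def using that T0
      by (intro le_double_sum[where f="\<lambda>i j. pb T (col (Yb x) i j) + pb T (pderiv (col (Yb x) i j))"])
         (auto intro!: add_nonneg_nonneg pb_nonneg)
    have p1: "\<bar>w (Yb x) t (i,j)\<bar> \<le> pb T (col (Yb x) i j)" unfolding w_def
      using pb_bound sf_rng[OF that(3)] by auto
    have p2: "\<bar>poly (pderiv (col (Yb x) i j)) (sf c t)\<bar> \<le> pb T (pderiv (col (Yb x) i j))"
      using pb_bound sf_rng[OF that(3)] by auto
    show ?thesis using le p1 p2 pb_nonneg[of T "col (Yb x) i j"] pb_nonneg[of T "pderiv (col (Yb x) i j)"] T0 by auto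
  qed
  have ucont: "continuous_on {0..} (\<lambda>t. u t p)" for p
  proof (cases "interior_node M N p")
    case True
    show ?thesis using is_solD(3)[OF ref True] by (intro DERIV_continuous_on) auto
  next
    case False
    then have "u t p = 0" if "t \<in> {0..}" for t using is_solD(2)[OF ref that] in_F_zero by blast
    then show ?thesis by (subst continuous_on_cong[OF refl, where g="\<lambda>t. 0"]) auto
  qed
  have ucT: "continuous_on {c..T} (\<lambda>t. u t p)" for p
    using ucont by (rule continuous_on_subset) (use c0 in auto)
  have "\<forall>j\<in>R. \<exists>m. m > 0 \<and> (\<forall>t\<in>{c..T}. m \<le> \<bar>(1/2)*u t (2,j) - 2*u t (1,j)\<bar>)"
  proof
    fix j assume j: "j \<in> R"
    define g where "g t = \<bar>(1/2)*u t (2,j) - 2*u t (1,j)\<bar>" for t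
    have gc: "continuous_on {c..T} g" unfolding g_def by (intro continuous_intros ucT)
    obtain t0 where t0: "t0 \<in> {c..T}" "\<forall>t\<in>{c..T}. g t0 \<le> g t"
      using continuous_attains_inf[OF compact_Icc _ gc] c0 by auto
    have "g t0 > 0" using nondeg t0 c0 j unfolding g_def R_def by auto
    show "\<exists>m. m > 0 \<and> (\<forall>t\<in>{c..T}. m \<le> \<bar>(1/2)*u t (2,j) - 2*u t (1,j)\<bar>)"
    proof (intro exI[of _ "g t0"] conjI ballI)
      show "g t0 > 0" by fact
      fix t assume "t \<in> {c..T}"
      then have "g t0 \<le> g t" using t0 by blast
      then show "g t0 \<le> \<bar>(1/2)*u t (2,j) - 2*u t (1,j)\<bar>" by (simp add: g_def)
    qed
  qed
  then obtain mf where mf: "\<forall>j\<in>R. mf j > 0 \<and> (\<forall>t\<in>{c..T}. mf j \<le> \<bar>(1/2)*u t (2,j) - 2*u t (1,j)\<bar>)"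
    by (metis (no_types) bchoice)
  define m0 where "m0 = Min (mf ` R)"
  have m0: "m0 > 0" unfolding m0_def using fR RI mf by auto
  have m0le: "m0 \<le> \<bar>(1/2)*u t (2,j) - 2*u t (1,j)\<bar>" if "j \<in> R" "t \<in> {c..T}" for j t
  proof -
    have "m0 \<le> mf j" unfolding m0_def using fR that by auto
    then show ?thesis using mf that by force
  qed
  have "\<forall>j\<in>R. \<exists>U. \<forall>t\<in>{c..T}. \<bar>u t (1,j)\<bar> + \<bar>u t (2,j)\<bar> \<le> U"
  proof
    fix j assume j: "j \<in> R"
    define g where "g t = \<bar>u t (1,j)\<bar> + \<bar>u t (2,j)\<bar>" for t
    have gc: "continuous_on {c..T} g" unfolding g_def by (intro continuous_intros ucT)
    obtain t0 where t0: "t0 \<in> {c..T}" "\<forall>t\<in>{c..T}. g t \<le> g t0"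
      using continuous_attains_sup[OF compact_Icc _ gc] c0 by auto
    show "\<exists>U. \<forall>t\<in>{c..T}. \<bar>u t (1,j)\<bar> + \<bar>u t (2,j)\<bar> \<le> U"
    proof (intro exI[of _ "g t0"] ballI)
      fix t assume "t \<in> {c..T}"
      then have "g t \<le> g t0" using t0 by blast
      then show "\<bar>u t (1,j)\<bar> + \<bar>u t (2,j)\<bar> \<le> g t0" by (simp add: g_def)
    qed
  qed
  then obtain Uf where Uf: "\<forall>j\<in>R. \<forall>t\<in>{c..T}. \<bar>u t (1,j)\<bar> + \<bar>u t (2,j)\<bar> \<le> Uf j"
    by (metis (no_types) bchoice)
  define U where "U = (\<Sum>j\<in>R. \<bar>Uf j\<bar>)"
  have Ule: "\<bar>u t (1,j)\<bar> \<le> U \<and> \<bar>u t (2,j)\<bar> \<le> U" if "j \<in> R" "t \<in> {c..T}" for j t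
  proof -
    have "\<bar>Uf j\<bar> \<le> U" unfolding U_def using fR that by (intro member_le_sum) auto
    then show ?thesis using Uf that by force
  qed
  have U0: "U \<ge> 0" unfolding U_def by (simp add: sum_nonneg)
  define Q where "Q = 7 + h^2"
  define P0 where "P0 = 3*U + 3 + Q"
  have Q0: "Q > 0" "Q \<ge> 0" unfolding Q_def by (auto simp: add_pos_nonneg)
  have P00: "P0 > 0" unfolding P0_def using U0 Q0 by simp
  define \<eta> where "\<eta> = min (min 1 (m0/(5+3*Q))) (min (m0^2/(16*P0*Q)) (m0/(16*Q)))"
  have e0: "\<eta> > 0" unfolding \<eta>_def using m0 Q0 P00 by simp
  have e1: "\<eta> \<le> 1" unfolding \<eta>_def by simp
  have e2: "(5+3*Q)*\<eta> \<le> m0"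
  proof -
    have "\<eta> \<le> m0/(5+3*Q)" unfolding \<eta>_def by simp
    then show ?thesis using Q0 by (simp add: field_simps)
  qed
  have e3: "16*(3*U+3+Q)*Q*\<eta> \<le> m0\<^sup>2"
  proof -
    have "\<eta> \<le> m0^2/(16*P0*Q)" unfolding \<eta>_def by simp
    moreover have pos: "16*P0*Q > 0" using Q0 P00 by simp
    ultimately have "\<eta> * (16*P0*Q) \<le> m0^2" by (simp add: pos_le_divide_eq)
    then show ?thesis unfolding P0_def by (simp add: algebra_simps)
  qed
  have e4: "16*Q*\<eta> \<le> m0"
  proof -
    have "\<eta> \<le> m0/(16*Q)" unfolding \<eta>_def by simp
    then show ?thesis using Q0 by (simp add: field_simps)
  qed
  define \<epsilon> where "\<epsilon> = \<eta> / (Cw + 1)"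
  have eps0: "\<epsilon> > 0" unfolding \<epsilon>_def using e0 Cw0 by simp
  have epsC: "\<epsilon> * Cw \<le> \<eta>"
  proof -
    have "\<epsilon> * Cw \<le> \<epsilon> * (Cw + 1)" using eps0 by simp
    also have "\<dots> = \<eta>" unfolding \<epsilon>_def using Cw0 by simp
    finally show ?thesis .
  qed
  have main: "\<forall>Z. in_F M N Z \<and>
           (\<forall>p. interior_node M N p \<longrightarrow> \<bar>Z p - u T p\<bar> < \<epsilon>) \<longrightarrow>
           (\<exists>lam. admissible N T lam \<and>
              (\<forall>j\<in>{1..N-1}. \<forall>t\<in>{0..T}. \<bar>lam j t\<bar> < 1) \<and>
              (\<exists>v. is_sol h M N {0..T} F u0 lam v) \<and>
              (\<forall>v. is_sol h M N {0..T} F u0 lam v \<longrightarrow> v T = Z))"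
  proof (intro allI impI)
    fix Z assume Zass: "in_F M N Z \<and> (\<forall>p. interior_node M N p \<longrightarrow> \<bar>Z p - u T p\<bar> < \<epsilon>)"
    define D where "D p = Z p - u T p" for p
    have Dle: "\<forall>x\<in>I. \<bar>D x\<bar> \<le> \<epsilon>"
    proof
      fix x assume "x \<in> I"
      then have "interior_node M N x" using Iint by blast
      then have "\<bar>Z x - u T x\<bar> < \<epsilon>" using Zass by blast
      then show "\<bar>D x\<bar> \<le> \<epsilon>" unfolding D_def by simp
    qed
    define Y where "Y = Yc D"
    define w0 where "w0 = w Y"
    define wd where "wd i j t = poly (pderiv (col Y i j)) (sf c t)" for i j t
    have wb: "\<bar>w0 t (i,j)\<bar> \<le> \<eta> \<and> \<bar>wd i j t\<bar> \<le> \<eta>" if "i \<in> {1,2}" "j \<le> N" "t \<in> {0..T}" for i j t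
    proof -
      have "\<bar>w0 t (i,j)\<bar> \<le> \<epsilon> * Cw" unfolding w0_def Y_def w_lin Cw_def
        using bb_w[OF that] by (intro lin_bound[OF fI Dle]) auto
      moreover have "\<bar>wd i j t\<bar> \<le> \<epsilon> * Cw" unfolding wd_def Y_def wd_lin Cw_def
        using bb_w[OF that] by (intro lin_bound[OF fI Dle]) auto
      ultimately show ?thesis using epsC by linarith
    qed
    define rr where "rr j t = w0 t (1,j+1) + w0 t (1,j-1) - h^2 * wd 1 j t - 4 * w0 t (1,j) + w0 t (2,j)" for j t
    define AA where "AA j t = u t (1,j) + w0 t (1,j)" for j t
    define BB where "BB j t = u t (2,j) + w0 t (2,j)" for j t
    define pp where "pp j t = 2*AA j t - BB j t + rr j t" for j t
    define qq where "qq j t = 4*AA j t - BB j t + 3*rr j t" for j t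
    define \<Lambda> where "\<Lambda> j t = -4 * rr j t * (qq j t / \<bar>qq j t\<bar>) / (\<bar>qq j t\<bar> + sqrt ((qq j t)\<^sup>2 - 8 * pp j t * rr j t))" for j t
    define lam where "lam j t = \<Lambda> j (max c t)" for j t
    have rr0: "rr j t = 0" if "t \<le> c" for j t
      unfolding rr_def w0_def wd_def using w_zero[OF that] wd_zero[OF that] by simp
    have rrb: "\<bar>rr j t\<bar> \<le> Q * \<eta>" if "j \<in> R" "t \<in> {0..T}" for j t
    proof -
      have jN: "j + 1 \<le> N" "j - 1 \<le> N" "j \<le> N" using that unfolding R_def by auto
      note b1 = wb[of 1 "j+1" t] and b2 = wb[of 1 "j-1" t] and b3 = wb[of 1 j t] and b4 = wb[of 2 j t]
      have "\<bar>h^2 * wd 1 j t\<bar> \<le> h^2 * \<eta>" using b3 jN that by (simp add: abs_mult mult_left_mono)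
      then show ?thesis using b1 b2 b3 b4 jN that unfolding rr_def Q_def abs_le_iff by (simp add: algebra_simps)
    qed
    have sb: "\<bar>qq j t\<bar> \<ge> m0 \<and> (qq j t)\<^sup>2 - 8 * pp j t * rr j t \<ge> 0 \<and> \<bar>\<Lambda> j t\<bar> \<le> 1/4"
      if "j \<in> R" "t \<in> {c..T}" for j t
    proof -
      have t: "t \<in> {0..T}" using that c0 by auto
      have jN: "j \<le> N" using that unfolding R_def by auto
      note S = small_bound[OF m0 m0le[OF that] conjunct1[OF Ule[OF that]] conjunct2[OF Ule[OF that]]
          conjunct1[OF wb[of 1 j t]] conjunct1[OF wb[of 2 j t]] rrb[OF that(1) t] Q0(2) less_imp_le[OF e0] e1 e2 e3 e4]
      show ?thesis using S jN t unfolding \<Lambda>_def pp_def qq_def AA_def BB_def by simp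
    qed
    have lam_b: "\<bar>lam j t\<bar> \<le> 1/4" if "j \<in> R" "t \<in> {0..T}" for j t
      unfolding lam_def using sb[OF that(1), of "max c t"] that c0 by auto
    have lam_eq: "2*(1+1/(1+lam j t))*AA j t - 2/(2+lam j t)*BB j t = rr j t + 4*AA j t - BB j t"
      if "j \<in> R" "t \<in> {0..T}" for j t
    proof (cases "t \<le> c")
      case True
      have "\<Lambda> j c = 0" unfolding \<Lambda>_def using rr0[of c j] by simp
      then have "lam j t = 0" unfolding lam_def using True by (simp add: max_def)
      then show ?thesis using rr0[OF True, of j] by simp
    next
      case False
      then have tc: "t \<in> {c..T}" "lam j t = \<Lambda> j t" using that unfolding lam_def by auto
      note S = sb[OF that(1) tc(1)]
      show ?thesis unfolding tc(2)
        by (rule lam_solve[of "AA j t" "BB j t" "rr j t"]) (use S m0 in \<open>auto simp: \<Lambda>_def pp_def qq_def\<close>)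
    qed
    show "\<exists>lam. admissible N T lam \<and>
              (\<forall>j\<in>{1..N-1}. \<forall>t\<in>{0..T}. \<bar>lam j t\<bar> < 1) \<and>
              (\<exists>v. is_sol h M N {0..T} F u0 lam v) \<and>
              (\<forall>v. is_sol h M N {0..T} F u0 lam v \<longrightarrow> v T = Z)"
    proof (intro exI[of _ lam] conjI)
      have wc: "continuous_on S (\<lambda>t. w0 t (i,j))" for S i j
        unfolding w0_def w_def sf_def by (simp, intro continuous_intros)
      have wdc: "continuous_on S (wd i j)" for S i j
        unfolding wd_def sf_def by (intro continuous_intros)
      have Lc: "continuous_on {c..T} (\<Lambda> j)" if j: "j \<in> R" for j
      proof -
        have rc: "continuous_on {c..T} (rr j)" unfolding rr_def by (intro continuous_intros wc wdc)
        have Ac: "continuous_on {c..T} (AA j)" unfolding AA_def by (intro continuous_intros wc ucT)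
        have Bc: "continuous_on {c..T} (BB j)" unfolding BB_def by (intro continuous_intros wc ucT)
        have qc: "continuous_on {c..T} (qq j)" unfolding qq_def by (intro continuous_intros Ac Bc rc)
        have pc: "continuous_on {c..T} (pp j)" unfolding pp_def by (intro continuous_intros Ac Bc rc)
        have nz: "\<forall>t\<in>{c..T}. \<bar>qq j t\<bar> \<noteq> 0 \<and> \<bar>qq j t\<bar> + sqrt ((qq j t)\<^sup>2 - 8 * pp j t * rr j t) \<noteq> 0"
        proof
          fix t assume t: "t \<in> {c..T}"
          have "\<bar>qq j t\<bar> \<ge> m0" "(qq j t)\<^sup>2 - 8 * pp j t * rr j t \<ge> 0" using sb[OF j t] by auto
          then show "\<bar>qq j t\<bar> \<noteq> 0 \<and> \<bar>qq j t\<bar> + sqrt ((qq j t)\<^sup>2 - 8 * pp j t * rr j t) \<noteq> 0"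
            using m0 real_sqrt_ge_zero[of "(qq j t)\<^sup>2 - 8 * pp j t * rr j t"] by linarith
        qed
        have eqL: "\<Lambda> j = (\<lambda>t. -4 * rr j t * (qq j t / \<bar>qq j t\<bar>) / (\<bar>qq j t\<bar> + sqrt ((qq j t)\<^sup>2 - 8 * pp j t * rr j t)))"
          unfolding \<Lambda>_def by (rule ext) simp
        have "continuous_on {c..T} (\<lambda>t. -4 * rr j t * (qq j t / \<bar>qq j t\<bar>) / (\<bar>qq j t\<bar> + sqrt ((qq j t)\<^sup>2 - 8 * pp j t * rr j t)))"
          by (intro continuous_intros qc pc rc) (use nz in auto)
        then show ?thesis unfolding eqL .
      qed
      have lamc: "continuous_on {0..T} (lam j)" if "j \<in> R" for j
      proof -
        have "continuous_on {0..T} (\<lambda>t. \<Lambda> j (max c t))"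
          by (rule continuous_on_compose2[OF Lc[OF that]]) (use c0 in \<open>auto intro!: continuous_intros\<close>)
        then show ?thesis unfolding lam_def[abs_def] by simp
      qed
      show "admissible N T lam"
        unfolding admissible_def using lamc lam_b unfolding R_def
        by (intro conjI ballI exI[of _ "1/4"]) auto
      show "\<forall>j\<in>{1..N-1}. \<forall>t\<in>{0..T}. \<bar>lam j t\<bar> < 1"
        using lam_b unfolding R_def by force
      define v where "v t = (\<lambda>q. u t q + w0 t q)" for t
      have vsol: "is_sol h M N {0..T} F u0 lam v"
        unfolding is_sol_def
      proof (intro conjI allI impI ballI)
        show "v 0 = u0" using is_solD(1)[OF ref] w_zero c0 unfolding v_def w0_def by (auto simp: fun_eq_iff)
      next
        fix t :: real assume t: "t \<in> {0..T}"
        show "in_F M N (v t)" unfolding in_F_def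
        proof (intro allI impI)
          fix q assume q: "\<not> interior_node M N q"
          have "u t q = 0" using is_solD(2)[OF ref, of t] t in_F_zero[OF _ q] by auto
          moreover have "w0 t q = 0" using in_F_zero[OF w_inF q] unfolding w0_def by blast
          ultimately show "v t q = 0" unfolding v_def by simp
        qed
      next
        fix p and t :: real assume p: "interior_node M N p" and t: "t \<in> {0..T}"
        obtain i j where pij: "p = (i,j)" by (cases p)
        have ij: "1 \<le> i" "i \<le> M-1" "j \<in> R" using p Iint unfolding pij I_def by auto
        have du: "((\<lambda>s. u s p) has_real_derivative F t p - Aop h (\<lambda>j. 0) (u t) p) (at t within {0..T})"
          using is_solD(3)[OF ref p, of t] t by (auto intro: has_field_derivative_subset)
        have dw: "((\<lambda>s. w0 s p) has_real_derivative wd i j t) (at t within {0..T})"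
          unfolding pij w0_def wd_def by (rule has_field_derivative_at_within[OF w_der])
        have EQ: "F t p - Aop h (\<lambda>j. lam j t) (v t) p = (F t p - Aop h (\<lambda>j. 0) (u t) p) + wd i j t"
        proof (cases "i = 1")
          case True
          have X: "Aop h (\<lambda>j. lam j t) (v t) p = (rr j t + 4*AA j t - BB j t - v t (1,j+1) - v t (1,j-1))/h\<^sup>2"
            using lam_eq[OF ij(3) t] True unfolding pij Aop_def Let_def by (simp add: v_def AA_def BB_def)
          have Y0: "Aop h (\<lambda>j. 0) (u t) p = (4 * u t (1,j) - u t (2,j) - u t (1,j+1) - u t (1,j-1))/h\<^sup>2"
            using True unfolding pij Aop_def Let_def by simp
          show ?thesis unfolding X Y0 using h True
            by (simp add: v_def rr_def AA_def BB_def field_simps)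
        next
          case False
          have i2: "2 \<le> i" using False ij by simp
          have rec: "w0 t (i-1,j) = h^2 * wd i j t + 4 * w0 t (i,j) - w0 t (i+1,j) - w0 t (i,j+1) - w0 t (i,j-1)"
            unfolding w0_def w_def wd_def using col_rec[OF i2 ij(2) ij(3), of Y] by simp
          have X: "Aop h l f p = (4 * f (i,j) - f (i+1,j) - f (i-1,j) - f (i,j+1) - f (i,j-1))/h\<^sup>2" for l f
            using False unfolding pij Aop_def Let_def by simp
          show ?thesis unfolding X using h rec by (simp add: v_def field_simps)
        qed
        show "((\<lambda>s. v s p) has_real_derivative F t p - Aop h (\<lambda>j. lam j t) (v t) p) (at t within {0..T})"
          unfolding EQ using DERIV_add[OF du dw] unfolding v_def by simp
      qed
      show "\<exists>v. is_sol h M N {0..T} F u0 lam v" using vsol by blast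
      have vT: "v T = Z"
      proof
        fix q
        show "v T q = Z q"
        proof (cases "interior_node M N q")
          case True
          then obtain i j where q: "q = (i,j)" "(i,j) \<in> I" using Iint by (cases q) auto
          then show ?thesis unfolding v_def w0_def Y_def using w_T[OF q(2), of D] unfolding D_def by simp
        next
          case False
          have "u T q = 0" using is_solD(2)[OF ref, of T] T0 in_F_zero[OF _ False] by auto
          moreover have "w0 T q = 0" using in_F_zero[OF w_inF False] unfolding w0_def by blast
          moreover have "Z q = 0" using Zass in_F_zero[OF _ False] by blast
          ultimately show ?thesis unfolding v_def by simp
        qed
      qed
      show "\<forall>v'. is_sol h M N {0..T} F u0 lam v' \<longrightarrow> v' T = Z"
      proof (intro allI impI)
        fix v' assume "is_sol h M N {0..T} F u0 lam v'"
        then have "v T = v' T" using sol_unique[OF h _ _ vsol] T0 lam_b unfolding R_def by auto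
        then show "v' T = Z" using vT by simp
      qed
    qed
  qed
  show ?thesis using main eps0 zero_less_one by blast
qed

end
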